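(* Let $K\in\{\mathbb R,\mathbb C,\mathbb H\}$ and let $(E,d)$ be a metric vector space over $K$ such that $d$ is $C_0$-translation invariant and $(C_1,C_2,C_3)$-lipschitz multiplicative. Define $d_0(x,y)=\int_{\mathbb U}d(ux,uy)\,d\mu(u)$. Then $d_0$ is a distance on $E$ which is $(C_1,C_2+C_3)$-lipschitz equivalent to $d$, is $C_0$-translation invariant and is $(C_1,C_2,C_3)$-lipschitz multiplicative. Moreover $d$ and $d_0$ define the same topology on $E$.
   Context: $K$ has its usual absolute value. A metric vector space is a topological vector space over $K$ whose topology is generated by the metric $d$. $\mathbb U=\{u\in K:|u|=1\}$, $\mu$ the right-invariant Haar probability measure on $\mathbb U$. $d$ is $C_0$-translation invariant if $d(x+z,y+z)\le d(x,y)+C_0$ for all $x,y,z$. For $C_1\ge1$, $C_2,C_3\ge0$, $d$ is $(C_1,C_2,C_3)$-lipschitz multiplicative if $C_1^{-1}|\lambda|d(x,y)-C_2|\lambda|-C_3\le d(\lambda x,\lambda y)\le C_1|\lambda|d(x,y)+C_2|\lambda|+C_3$ for all $\lambda\in K$, $x,y\in E$. A distance $\rho$ is $(A,B)$-lipschitz equivalent to $\sigma$ if $A^{-1}\sigma(x,y)-B\le\rho(x,y)\le A\sigma(x,y)+B$ for all $x,y$. *)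

theory Defs
  imports "HOL-Analysis.Analysis" "HOL-Probability.Probability"
begin

text \<open>The scalar field K is a real normed division algebra (R, C or H);
  |.| is its norm.  E is an abelian group with a (left) scalar action sc of K
  making it a vector space over K.\<close>

definition left_vector_space :: "('k::real_normed_div_algebra \<Rightarrow> 'e::ab_group_add \<Rightarrow> 'e) \<Rightarrow> bool" where
  "left_vector_space sc \<longleftrightarrow>
     (\<forall>a x y. sc a (x + y) = sc a x + sc a y) \<and>
     (\<forall>a b x. sc (a + b) x = sc a x + sc b x) \<and>
     (\<forall>a b x. sc (a * b) x = sc a (sc b x)) \<and>
     (\<forall>x. sc 1 x = x)"

definition metric_vector_space ::
  "('k::real_normed_div_algebra \<Rightarrow> 'e::ab_group_add \<Rightarrow> 'e) \<Rightarrow> ('e \<Rightarrow> 'e \<Rightarrow> real) \<Rightarrow> bool" where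
  "metric_vector_space sc d \<longleftrightarrow>
     left_vector_space sc \<and> Metric_space UNIV d \<and>
     continuous_map (prod_topology (Metric_space.mtopology UNIV d) (Metric_space.mtopology UNIV d))
        (Metric_space.mtopology UNIV d) (\<lambda>(x, y). x + y) \<and>
     continuous_map (prod_topology (euclidean :: 'k topology) (Metric_space.mtopology UNIV d))
        (Metric_space.mtopology UNIV d) (\<lambda>(a, x). sc a x)"

definition translation_invariant :: "real \<Rightarrow> ('e::plus \<Rightarrow> 'e \<Rightarrow> real) \<Rightarrow> bool" where
  "translation_invariant C0 d \<longleftrightarrow> (\<forall>x y z. d (x + z) (y + z) \<le> d x y + C0)"

definition lipschitz_multiplicative ::
  "real \<Rightarrow> real \<Rightarrow> real \<Rightarrow> ('k::real_normed_div_algebra \<Rightarrow> 'e \<Rightarrow> 'e) \<Rightarrow> ('e \<Rightarrow> 'e \<Rightarrow> real) \<Rightarrow> bool" where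
  "lipschitz_multiplicative C1 C2 C3 sc d \<longleftrightarrow>
     (\<forall>c x y. inverse C1 * norm c * d x y - C2 * norm c - C3 \<le> d (sc c x) (sc c y) \<and>
              d (sc c x) (sc c y) \<le> C1 * norm c * d x y + C2 * norm c + C3)"

definition lipschitz_equivalent :: "real \<Rightarrow> real \<Rightarrow> ('e \<Rightarrow> 'e \<Rightarrow> real) \<Rightarrow> ('e \<Rightarrow> 'e \<Rightarrow> real) \<Rightarrow> bool" where
  "lipschitz_equivalent A B \<rho> \<sigma> \<longleftrightarrow>
     (\<forall>x y. inverse A * \<sigma> x y - B \<le> \<rho> x y \<and> \<rho> x y \<le> A * \<sigma> x y + B)"

definition unit_sphere :: "'k::real_normed_div_algebra set" where
  "unit_sphere = {u. norm u = 1}"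

definition right_haar_prob :: "'k::real_normed_div_algebra measure \<Rightarrow> bool" where
  "right_haar_prob M \<longleftrightarrow>
     prob_space M \<and> space M = unit_sphere \<and> sets M = sets (restrict_space borel unit_sphere) \<and>
     (\<forall>v\<in>unit_sphere. distr M M (\<lambda>u. u * v) = M)"

definition averaged_dist ::
  "'k::real_normed_div_algebra measure \<Rightarrow> ('k \<Rightarrow> 'e \<Rightarrow> 'e) \<Rightarrow> ('e \<Rightarrow> 'e \<Rightarrow> real) \<Rightarrow> 'e \<Rightarrow> 'e \<Rightarrow> real" where
  "averaged_dist M sc d x y = (\<integral>u. d (sc u x) (sc u y) \<partial>M)"

end

theory Submission
  imports Defs
begin

lemma of_real_mult_commute_aux:
  fixes u v :: "'k::real_normed_div_algebra"
  shows "u * (of_real r * v) = of_real r * (u * v)"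
  by (simp add: of_real_def mult_scaleR_left mult_scaleR_right)

theorem lemma2:
  fixes sc :: "'k::real_normed_div_algebra \<Rightarrow> 'e::ab_group_add \<Rightarrow> 'e"
    and d :: "'e \<Rightarrow> 'e \<Rightarrow> real"
    and M :: "'k measure"
    and C0 C1 C2 C3 :: real
  assumes "metric_vector_space sc d"
    and "right_haar_prob M"
    and "C1 \<ge> 1" and "C2 \<ge> 0" and "C3 \<ge> 0"
    and "translation_invariant C0 d"
    and "lipschitz_multiplicative C1 C2 C3 sc d"
  shows "Metric_space UNIV (averaged_dist M sc d)
    \<and> lipschitz_equivalent C1 (C2 + C3) (averaged_dist M sc d) d
    \<and> translation_invariant C0 (averaged_dist M sc d)
    \<and> lipschitz_multiplicative C1 C2 C3 sc (averaged_dist M sc d)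
    \<and> Metric_space.mtopology UNIV (averaged_dist M sc d) = Metric_space.mtopology UNIV d"
proof -
  note mvs = assms(1)[unfolded metric_vector_space_def]
  have lvs: "left_vector_space sc" and MS: "Metric_space UNIV d"
    and csc: "continuous_map (prod_topology euclidean (Metric_space.mtopology UNIV d))
        (Metric_space.mtopology UNIV d) (\<lambda>(a, x). sc a x)"
    using mvs by auto
  interpret D: Metric_space UNIV d by (rule MS)
  have sc_mult: "\<And>a b x. sc (a*b) x = sc a (sc b x)" and sc_one: "\<And>x. sc 1 x = x"
    and sc_add: "\<And>a x y. sc a (x+y) = sc a x + sc a y"
    using lvs unfolding left_vector_space_def by auto
  note H = assms(2)[unfolded right_haar_prob_def]
  have P: "prob_space M" and spM: "space M = unit_sphere"
    and setsM: "sets M = sets (restrict_space borel unit_sphere)"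
    and inv: "\<And>v. v \<in> unit_sphere \<Longrightarrow> distr M M (\<lambda>u. u * v) = M"
    using H by auto
  interpret P: prob_space M by (rule P)
  have LM1: "\<And>c x y. inverse C1 * norm c * d x y - C2 * norm c - C3 \<le> d (sc c x) (sc c y)"
    and LM2: "\<And>c x y. d (sc c x) (sc c y) \<le> C1 * norm c * d x y + C2 * norm c + C3"
    using assms(7) unfolding lipschitz_multiplicative_def by auto
  have TI: "\<And>x y z. d (x + z) (y + z) \<le> d x y + C0"
    using assms(6) unfolding translation_invariant_def by auto
  define I where "I = averaged_dist M sc d"
  have I_def': "\<And>x y. I x y = (\<integral>u. d (sc u x) (sc u y) \<partial>M)"
    by (simp add: I_def averaged_dist_def)

  have cont_sc1: "continuous_map euclidean D.mtopology (\<lambda>u. sc u x)" for x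
  proof -
    have "continuous_map euclidean (prod_topology euclidean D.mtopology) (\<lambda>u. (u, x))"
      by (intro continuous_map_pairedI) (auto simp: D.topspace_mtopology)
    from continuous_map_compose[OF this csc] show ?thesis by (simp add: o_def)
  qed
  have cont_sc2: "continuous_map D.mtopology D.mtopology (\<lambda>x. sc u x)" for u
  proof -
    have "continuous_map D.mtopology (prod_topology euclidean D.mtopology) (\<lambda>x. (u, x))"
      by (intro continuous_map_pairedI) (auto simp: D.topspace_mtopology)
    from continuous_map_compose[OF this csc] show ?thesis by (simp add: o_def)
  qed
  have cont_f: "continuous_on UNIV (\<lambda>u. d (sc u x) (sc u y))" for x y
  proof -
    have "continuous_map euclidean euclidean (\<lambda>u. mdist (metric (UNIV, d)) (sc u x) (sc u y))"
      by (rule continuous_map_mdist) (simp_all add: cont_sc1)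
    then show ?thesis by (simp add: continuous_map_iff_continuous2)
  qed
  have meas: "(\<lambda>u. d (sc u x) (sc u y)) \<in> borel_measurable M" for x y
    by (subst measurable_cong_sets[OF setsM refl])
      (rule measurable_restrict_space1, rule borel_measurable_continuous_onI, rule cont_f)
  have fb1: "inverse C1 * d x y - (C2 + C3) \<le> d (sc u x) (sc u y)"
    and fb2: "d (sc u x) (sc u y) \<le> C1 * d x y + (C2 + C3)"
    if "u \<in> space M" for x y u
  proof -
    have n: "norm u = 1" using that spM unfolding unit_sphere_def by auto
    show "inverse C1 * d x y - (C2 + C3) \<le> d (sc u x) (sc u y)" using LM1[of u x y] n by simp
    show "d (sc u x) (sc u y) \<le> C1 * d x y + (C2 + C3)" using LM2[of u x y] n by simp
  qed
  have int: "integrable M (\<lambda>u. d (sc u x) (sc u y))" for x y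
    by (rule P.integrable_const_bound[where B="C1 * d x y + (C2 + C3)"])
      (auto intro!: AE_I2 meas fb2)
  have intlin: "(\<integral>u. a * g u + b \<partial>M) = a * integral\<^sup>L M g + b" if "integrable M g" for g :: "'k \<Rightarrow> real" and a b :: real
  proof -
    have "(\<integral>u. a * g u + b \<partial>M) = (\<integral>u. a * g u \<partial>M) + (\<integral>u. b \<partial>M)"
      by (rule Bochner_Integration.integral_add) (use that integrable_mult_right[of a M g] in auto)
    then show ?thesis by (simp add: P.prob_space)
  qed
  have AE_ex: "\<exists>u\<in>space M. Q u" if ae: "AE u in M. Q u" for Q
  proof (rule ccontr)
    assume "\<not> (\<exists>u\<in>space M. Q u)"
    then have "AE u in M. Q u \<longrightarrow> False" by (intro AE_I2) auto
    from AE_mp[OF ae this] have "AE u in M. False" .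
    then show False by simp
  qed

  have I_nonneg: "0 \<le> I x y" for x y by (simp add: I_def')
  have I_comm: "I x y = I y x" for x y by (simp add: I_def' D.commute)
  have I_tri: "I x z \<le> I x y + I y z" for x y z
  proof -
    have "(\<integral>u. d (sc u x) (sc u y) + d (sc u y) (sc u z) \<partial>M) = I x y + I y z"
      unfolding I_def' by (rule Bochner_Integration.integral_add) (rule int)+
    moreover have "I x z \<le> (\<integral>u. d (sc u x) (sc u y) + d (sc u y) (sc u z) \<partial>M)"
      unfolding I_def' by (rule integral_mono) (auto intro!: int intro: D.triangle)
    ultimately show ?thesis by simp
  qed
  have I_zero: "I x y = 0 \<longleftrightarrow> x = y" for x y
  proof
    assume "I x y = 0"
    then have "AE u in M. d (sc u x) (sc u y) = 0"
      using integral_nonneg_eq_0_iff_AE[OF int] by (simp add: I_def')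
    then obtain u where u: "u \<in> space M" "d (sc u x) (sc u y) = 0" using AE_ex by blast
    then have "u \<noteq> 0" using spM unfolding unit_sphere_def by auto
    have "sc u x = sc u y" using u by simp
    then have "sc (inverse u * u) x = sc (inverse u * u) y" by (simp add: sc_mult)
    then show "x = y" using \<open>u \<noteq> 0\<close> by (simp add: sc_one)
  next
    assume "x = y" then show "I x y = 0" by (simp add: I_def')
  qed
  have MI: "Metric_space UNIV I"
    by (rule Metric_space.intro) (auto simp: I_nonneg I_comm I_zero intro: I_tri)
  interpret D0: Metric_space UNIV I by (rule MI)

  have LE: "lipschitz_equivalent C1 (C2 + C3) I d"
    unfolding lipschitz_equivalent_def
  proof (intro allI conjI)
    fix x y
    have "(\<integral>u. 0 * d (sc u x) (sc u y) + (inverse C1 * d x y - (C2 + C3)) \<partial>M) \<le> I x y"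
      unfolding I_def' by (rule integral_mono) (auto intro!: int fb1)
    then show "inverse C1 * d x y - (C2 + C3) \<le> I x y" by (simp add: intlin[OF int] P.prob_space)
    have "I x y \<le> (\<integral>u. 0 * d (sc u x) (sc u y) + (C1 * d x y + (C2 + C3)) \<partial>M)"
      unfolding I_def' by (rule integral_mono) (auto intro!: int fb2)
    then show "I x y \<le> C1 * d x y + (C2 + C3)" by (simp add: intlin[OF int] P.prob_space)
  qed

  have TR: "translation_invariant C0 I"
    unfolding translation_invariant_def
  proof (intro allI)
    fix x y z
    have "I (x + z) (y + z) \<le> (\<integral>u. 1 * d (sc u x) (sc u y) + C0 \<partial>M)"
      unfolding I_def' by (rule integral_mono) (use int[of "x+z" "y+z"] int[of x y] in \<open>auto simp: sc_add TI\<close>)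
    then show "I (x + z) (y + z) \<le> I x y + C0" using intlin[OF int[of x y], of 1 C0] by (simp add: I_def')
  qed

  have LMI: "lipschitz_multiplicative C1 C2 C3 sc I"
    unfolding lipschitz_multiplicative_def
  proof (intro allI conjI)
    fix c :: 'k and x y :: 'e
    define r where "r = norm c"
    define v where "v = (if c = 0 then 1 else of_real (inverse r) * c)"
    have r0: "r \<ge> 0" by (simp add: r_def)
    have v1: "v \<in> unit_sphere"
      by (auto simp: v_def unit_sphere_def r_def norm_mult norm_inverse)
    have cv: "c = of_real r * v"
      by (auto simp: v_def r_def mult.assoc[symmetric] of_real_mult[symmetric])
    define g where "g = (\<lambda>w. d (sc w x) (sc w y))"
    have hg: "d (sc u (sc c x)) (sc u (sc c y))
        = d (sc (of_real r) (sc (u * v) x)) (sc (of_real r) (sc (u * v) y))" for u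
      by (simp add: sc_mult[symmetric] cv of_real_mult_commute_aux)
    have Tm: "(\<lambda>u. u * v) \<in> M \<rightarrow>\<^sub>M M"
    proof -
      have "(\<lambda>u. u * v) \<in> borel \<rightarrow>\<^sub>M borel"
        by (rule borel_measurable_continuous_onI) (intro continuous_intros)
      then have "(\<lambda>u. u * v) \<in> restrict_space borel unit_sphere \<rightarrow>\<^sub>M restrict_space borel unit_sphere"
        by (rule measurable_restrict_space3) (use v1 in \<open>auto simp: unit_sphere_def norm_mult\<close>)
      then show ?thesis by (subst measurable_cong_sets[OF setsM setsM])
    qed
    have gm: "g \<in> borel_measurable M" unfolding g_def by (rule meas)
    have gint: "integrable M (\<lambda>u. g (u * v))"
      using integrable_distr_eq[OF Tm gm] inv[OF v1] int[of x y] by (simp add: g_def)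
    have gI: "(\<integral>u. g (u * v) \<partial>M) = I x y"
      using integral_distr[OF Tm gm] inv[OF v1] by (simp add: g_def I_def')
    have nr: "norm (of_real r :: 'k) = r" using r0 by simp
    have "(\<integral>u. (inverse C1 * r) * g (u * v) + (- C2 * r - C3) \<partial>M) \<le> I (sc c x) (sc c y)"
      unfolding I_def'
    proof (rule integral_mono)
      show "integrable M (\<lambda>u. inverse C1 * r * g (u * v) + (- C2 * r - C3))"
        using gint by auto
      show "integrable M (\<lambda>u. d (sc u (sc c x)) (sc u (sc c y)))" by (rule int)
      fix u show "inverse C1 * r * g (u * v) + (- C2 * r - C3) \<le> d (sc u (sc c x)) (sc u (sc c y))"
        using LM1[of "of_real r" "sc (u * v) x" "sc (u * v) y"] nr by (simp add: hg g_def)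
    qed
    then show "inverse C1 * norm c * I x y - C2 * norm c - C3 \<le> I (sc c x) (sc c y)"
      by (simp add: intlin[OF gint] gI r_def)
    have "I (sc c x) (sc c y) \<le> (\<integral>u. (C1 * r) * g (u * v) + (C2 * r + C3) \<partial>M)"
      unfolding I_def'
    proof (rule integral_mono)
      show "integrable M (\<lambda>u. C1 * r * g (u * v) + (C2 * r + C3))"
        using gint by auto
      show "integrable M (\<lambda>u. d (sc u (sc c x)) (sc u (sc c y)))" by (rule int)
      fix u show "d (sc u (sc c x)) (sc u (sc c y)) \<le> C1 * r * g (u * v) + (C2 * r + C3)"
        using LM2[of "of_real r" "sc (u * v) x" "sc (u * v) y"] nr by (simp add: hg g_def)
    qed
    then show "I (sc c x) (sc c y) \<le> C1 * norm c * I x y + C2 * norm c + C3"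
      by (simp add: intlin[OF gint] gI r_def)
  qed

  have A: "\<exists>\<delta>>0. \<forall>y. d x y < \<delta> \<longrightarrow> I x y < e" if e0: "e > 0" for x e
  proof (rule ccontr)
    assume na: "\<not> ?thesis"
    have "\<exists>y. d x y < 1 / real (Suc n) \<and> e \<le> I x y" for n
    proof -
      have "(1::real) / real (Suc n) > 0" by simp
      then show ?thesis using na by (meson not_less)
    qed
    then obtain Y where Y1: "\<And>n. d x (Y n) < 1 / real (Suc n)" and Y2: "\<And>n. e \<le> I x (Y n)"
      by metis
    have dY: "(\<lambda>n. d (Y n) x) \<longlonglongrightarrow> 0"
      by (rule LIMSEQ_norm_0) (use Y1 in \<open>simp add: D.commute\<close>)
    then have lim: "limitin D.mtopology Y x sequentially"
      by (simp add: D.limitin_metric_dist_null)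
    have pw: "(\<lambda>n. d (sc u (Y n)) (sc u x)) \<longlonglongrightarrow> 0" for u
    proof -
      have "limitin D.mtopology ((\<lambda>z. sc u z) \<circ> Y) (sc u x) sequentially"
        by (rule continuous_map_limit[OF cont_sc2 lim])
      then show ?thesis by (simp add: D.limitin_metric_dist_null o_def)
    qed
    have "(\<lambda>n. (\<integral>u. d (sc u x) (sc u (Y n)) \<partial>M)) \<longlonglongrightarrow> (\<integral>u. 0 \<partial>M)"
    proof (rule integral_dominated_convergence[where w="\<lambda>u. C1 + (C2 + C3)"])
      show "(\<lambda>u. 0::real) \<in> borel_measurable M" by simp
      show "(\<lambda>u. d (sc u x) (sc u (Y n))) \<in> borel_measurable M" for n by (rule meas)
      show "integrable M (\<lambda>u. C1 + (C2 + C3))" by simp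
      show "AE u in M. (\<lambda>n. d (sc u x) (sc u (Y n))) \<longlonglongrightarrow> 0"
        using pw by (intro AE_I2) (simp add: D.commute)
      show "AE u in M. norm (d (sc u x) (sc u (Y n))) \<le> C1 + (C2 + C3)" for n
      proof (intro AE_I2)
        fix u assume u: "u \<in> space M"
        have "d x (Y n) \<le> 1" using Y1[of n]
          by (smt (verit) divide_le_eq_1_pos of_nat_0_less_iff of_nat_1 of_nat_mono zero_less_Suc Suc_eq_plus1 le_add2)
        then have "C1 * d x (Y n) \<le> C1" using assms(3) by (simp add: mult_left_le)
        then show "norm (d (sc u x) (sc u (Y n))) \<le> C1 + (C2 + C3)"
          using fb2[OF u, of x "Y n"] by simp
      qed
    qed
    then have "(\<lambda>n. I x (Y n)) \<longlonglongrightarrow> 0" by (simp add: I_def')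
    from order_tendstoD(2)[OF this e0] obtain n where "I x (Y n) < e"
      by (auto simp: eventually_sequentially)
    with Y2[of n] show False by simp
  qed
  have B: "\<exists>\<delta>>0. \<forall>y. I x y < \<delta> \<longrightarrow> d x y < e" if e0: "e > 0" for x e
  proof (rule ccontr)
    assume na: "\<not> ?thesis"
    have "\<exists>y. I x y < 1 / real (Suc n) \<and> e \<le> d x y" for n
    proof -
      have "(1::real) / real (Suc n) > 0" by simp
      then show ?thesis using na by (meson not_less)
    qed
    then obtain Y where Y1: "\<And>n. I x (Y n) < 1 / real (Suc n)" and Y2: "\<And>n. e \<le> d x (Y n)"
      by metis
    have "(\<lambda>n. (\<integral>u. norm (d (sc u x) (sc u (Y n))) \<partial>M)) \<longlonglongrightarrow> 0"
      by (rule LIMSEQ_norm_0) (use Y1 in \<open>simp add: I_def'\<close>)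
    from tendsto_L1_AE_subseq[OF int this] obtain r :: "nat \<Rightarrow> nat" where
      "strict_mono r" and ae: "AE u in M. (\<lambda>n. d (sc u x) (sc u (Y (r n)))) \<longlonglongrightarrow> 0"
      by blast
    from AE_ex[OF ae] obtain u where u: "u \<in> space M"
      and ul: "(\<lambda>n. d (sc u x) (sc u (Y (r n)))) \<longlonglongrightarrow> 0" by blast
    have "u \<noteq> 0" using u spM unfolding unit_sphere_def by auto
    have "limitin D.mtopology (\<lambda>n. sc u (Y (r n))) (sc u x) sequentially"
      using ul by (simp add: D.limitin_metric_dist_null D.commute)
    from continuous_map_limit[OF cont_sc2[of "inverse u"] this]
    have "limitin D.mtopology (\<lambda>n. sc (inverse u) (sc u (Y (r n)))) (sc (inverse u) (sc u x)) sequentially"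
      by (simp add: o_def)
    then have "limitin D.mtopology (\<lambda>n. Y (r n)) x sequentially"
      using \<open>u \<noteq> 0\<close> by (simp add: sc_mult[symmetric] sc_one)
    then have "(\<lambda>n. d (Y (r n)) x) \<longlonglongrightarrow> 0"
      by (simp add: D.limitin_metric_dist_null)
    from order_tendstoD(2)[OF this e0] obtain n where "d (Y (r n)) x < e"
      by (auto simp: eventually_sequentially)
    with Y2[of "r n"] show False by (simp add: D.commute)
  qed
  have TOP: "D0.mtopology = D.mtopology"
    unfolding topology_eq
  proof (intro allI)
    fix S
    show "openin D0.mtopology S = openin D.mtopology S"
      unfolding D0.openin_mtopology D.openin_mtopology
    proof (intro iffI conjI allI impI)
      fix x assume L: "S \<subseteq> UNIV \<and> (\<forall>x. x \<in> S \<longrightarrow> (\<exists>r>0. D0.mball x r \<subseteq> S))" and "x \<in> S"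
      then obtain r where r: "r > 0" "D0.mball x r \<subseteq> S" by blast
      obtain \<delta> where "\<delta> > 0" "\<forall>y. d x y < \<delta> \<longrightarrow> I x y < r" using A[OF r(1)] by blast
      then have "D.mball x \<delta> \<subseteq> S" using r(2) by (auto simp: D.in_mball D0.in_mball)
      then show "\<exists>r>0. D.mball x r \<subseteq> S" using \<open>\<delta> > 0\<close> by blast
    next
      fix x assume L: "S \<subseteq> UNIV \<and> (\<forall>x. x \<in> S \<longrightarrow> (\<exists>r>0. D.mball x r \<subseteq> S))" and "x \<in> S"
      then obtain r where r: "r > 0" "D.mball x r \<subseteq> S" by blast
      obtain \<delta> where "\<delta> > 0" "\<forall>y. I x y < \<delta> \<longrightarrow> d x y < r" using B[OF r(1)] by blast
      then have "D0.mball x \<delta> \<subseteq> S" using r(2) by (auto simp: D.in_mball D0.in_mball)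
      then show "\<exists>r>0. D0.mball x r \<subseteq> S" using \<open>\<delta> > 0\<close> by blast
    qed auto
  qed
  show ?thesis using MI LE TR LMI TOP unfolding I_def by blast
qed

end
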